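(* For integers $0\le a<b$ let $\Delta_3([a,b))$ denote the number of evil integers in $[a,b)$ divisible by $3$ minus the number of odious integers in $[a,b)$ divisible by $3$ (both even and odd integers are counted). Then: 1) For every integer $n\ge 1$: $\Delta_3([0,2^n))=2\cdot 3^{\frac n2-1}$ if $n$ is even, and $\Delta_3([0,2^n))=3^{\frac{n-1}{2}}$ if $n$ is odd. 2) For integers $n,m$: $$\Delta_3([2^n,2^n+2^m))=\begin{cases}3^{\lfloor\frac{m-1}{2}\rfloor}, & n \text{ odd},\ 1\le m\le n-1,\\ 3^{\frac m2-1}, & n \text{ and } m \text{ even},\ 2\le m\le n-2,\\ 0, & n \text{ even},\ m \text{ odd},\ 1\le m\le n-1.\end{cases}$$ 3) For integers $n,m$: $$\Delta_3([2^n+2^{n-2},\,2^n+2^{n-2}+2^m))=\begin{cases}-3^{\lfloor\frac{m-1}{2}\rfloor}, & n \text{ even},\ 1\le m\le n-3,\\ -3^{\frac m2-1}, & n \text{ odd},\ m \text{ even},\ 2\le m\le n-3,\\ 0, & n \text{ and } m \text{ odd},\ 1\le m\le n-4.\end{cases}$$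
   Context: A nonnegative integer is called evil if its binary expansion contains an even number of 1's, and odious if it contains an odd number of 1's; in particular $0$ is evil. An interval $[a,b)$ means the set of integers $x$ with $a\le x<b$. *)

theory Defs
  imports Main
begin

fun ones :: "nat \<Rightarrow> nat" where
  "ones n = (if n = 0 then 0 else n mod 2 + ones (n div 2))"

definition evil :: "nat \<Rightarrow> bool" where
  "evil x \<longleftrightarrow> even (ones x)"

definition odious :: "nat \<Rightarrow> bool" where
  "odious x \<longleftrightarrow> odd (ones x)"

definition Delta3 :: "nat \<Rightarrow> nat \<Rightarrow> int" where
  "Delta3 a b = int (card {x \<in> {a..<b}. 3 dvd x \<and> evil x})
              - int (card {x \<in> {a..<b}. 3 dvd x \<and> odious x})"

end

theory Submission imports Defs begin

declare ones.simps[simp del]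

lemma ones0[simp]: "ones 0 = 0" by (subst ones.simps) simp

lemma ones_rec: "ones x = x mod 2 + ones (x div 2)"
  by (cases "x = 0") (simp, subst ones.simps, simp)

lemma ones1: "ones 1 = 1" using ones_rec[of 1] by simp

lemma lt3: "(t::nat) < 3 \<Longrightarrow> t = 0 \<or> t = 1 \<or> t = 2" by linarith

lemma aux1: assumes "(t::nat) < 3" "r < 3" shows "((2*t) mod 3 = r) = (t = (2*r) mod 3)"
  using lt3[OF assms(1)] lt3[OF assms(2)] by (elim disjE) simp_all
lemma aux2: assumes "(t::nat) < 3" "r < 3" shows "((2*t+1) mod 3 = r) = (t = (2*r+1) mod 3)"
  using lt3[OF assms(1)] lt3[OF assms(2)] by (elim disjE) simp_all
lemma aux3: assumes "(a::nat) < 3" "b < 3" shows "((a+b) mod 3 = 0) = (b = (3-a) mod 3)"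
  using lt3[OF assms(1)] lt3[OF assms(2)] by (elim disjE) simp_all
lemma m2: "(2*z) mod 3 = (2*(z mod 3)) mod (3::nat)" by (simp add: mod_mult_right_eq)
lemma m21: "(2*z+1) mod 3 = (2*(z mod 3)+1) mod (3::nat)" by (metis mod_add_left_eq mod_mult_right_eq)

lemma ones_2z: "ones (2*z) = ones z"
  using ones_rec[of "2*z"] by simp

lemma ones_2z1: "ones (2*z+1) = Suc (ones z)"
  using ones_rec[of "2*z+1"] by simp

definition F :: "nat \<Rightarrow> nat \<Rightarrow> int" where
  "F m r = (\<Sum>y<2^m. if y mod 3 = r then (-1)^ones y else 0)"

lemma sum_double: "(\<Sum>y<2*N. g y) = (\<Sum>z<N. g (2*z) + g (2*z+1::nat))" for g :: "nat \<Rightarrow> int"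
  by (induction N) (simp_all add: sum.distrib)

lemma F_Suc:
  assumes "r < 3"
  shows "F (Suc m) r = F m ((2*r) mod 3) - F m ((2*r+1) mod 3)"
proof -
  have "F (Suc m) r = (\<Sum>z<2^m. (if (2*z) mod 3 = r then (-1)^ones (2*z) else 0)
         + (if (2*z+1) mod 3 = r then (-1)^ones (2*z+1) else 0))"
    unfolding F_def by (simp add: sum_double)
  also have "\<dots> = (\<Sum>z<2^m. (if z mod 3 = (2*r) mod 3 then (-1)^ones z else 0)
         - (if z mod 3 = (2*r+1) mod 3 then (-1)^ones z else 0))"
  proof (rule sum.cong[OF refl])
    fix z
    have a: "((2*z) mod 3 = r) = (z mod 3 = (2*r) mod 3)" apply (subst m2) using aux1[of "z mod 3" r] assms by simp
    have b: "((2*z+1) mod 3 = r) = (z mod 3 = (2*r+1) mod 3)" apply (subst m21) using aux2[of "z mod 3" r] assms by simp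
    show "(if (2*z) mod 3 = r then (-1)^ones (2*z) else 0)
         + (if (2*z+1) mod 3 = r then (-1)^ones (2*z+1) else (0::int)) =
         (if z mod 3 = (2*r) mod 3 then (-1)^ones z else 0)
         - (if z mod 3 = (2*r+1) mod 3 then (-1)^ones z else 0)"
      unfolding a b ones_2z ones_2z1 by simp
  qed
  also have "\<dots> = F m ((2*r) mod 3) - F m ((2*r+1) mod 3)"
    unfolding F_def by (simp add: sum_subtractf)
  finally show ?thesis .
qed

lemma F_rec: "F (Suc m) 0 = F m 0 - F m 1" "F (Suc m) 1 = F m 2 - F m 0"
   "F (Suc m) 2 = F m 1 - F m 2"
  using F_Suc[of 0 m] F_Suc[of 1 m] F_Suc[of 2 m] by simp_all

lemma F0: "F 0 0 = 1" "F 0 1 = 0" "F 0 2 = 0"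
  unfolding F_def by simp_all

lemma F_closed: "F (2*k+1) 0 = 3^k \<and> F (2*k+1) 1 = -(3^k) \<and> F (2*k+1) 2 = 0 \<and>
   F (2*k+2) 0 = 2*3^k \<and> F (2*k+2) 1 = -(3^k) \<and> F (2*k+2) 2 = -(3^k)"
proof (induction k)
  case 0
  then show ?case using F_rec[of 0] F_rec[of 1] F0 by (simp add: numeral_2_eq_2)
next
  case (Suc k)
  have A: "F (2*k+3) 0 = 3^Suc k" "F (2*k+3) 1 = -(3^Suc k)" "F (2*k+3) 2 = 0"
    using Suc F_rec[of "2*k+2"] by (simp_all add: eval_nat_numeral)
  have B: "F (2*k+4) 0 = 2*3^Suc k" "F (2*k+4) 1 = -(3^Suc k)" "F (2*k+4) 2 = -(3^Suc k)"
    using A F_rec[of "2*k+3"] by (simp_all add: eval_nat_numeral)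
  have e1: "2 * Suc k + 1 = 2*k+3" and e2: "2 * Suc k + 2 = 2*k+4" by simp_all
  show ?case unfolding e1 e2 using A B by simp
qed

lemma ones_shift: "y < 2^m \<Longrightarrow> ones (c*2^m + y) = ones c + ones y"
proof (induction m arbitrary: y)
  case 0 then show ?case by simp
next
  case (Suc m)
  have "ones (c*2^Suc m + y) = (c*2^Suc m + y) mod 2 + ones ((c*2^Suc m + y) div 2)"
    by (rule ones_rec)
  also have "(c*2^Suc m + y) mod 2 = y mod 2"
  proof -
    have h: "\<And>N::nat. (2*N + y) mod 2 = y mod 2" by simp
    have "c*2^Suc m = 2*(c*2^m)" by simp
    then show ?thesis using h by metis
  qed
  also have "(c*2^Suc m + y) div 2 = c*2^m + y div 2" by simp
  also have "ones (c*2^m + y div 2) = ones c + ones (y div 2)"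
    using Suc by (intro Suc.IH) auto
  finally show ?case using ones_rec[of y] by simp
qed

lemma ones_mult: "ones (c*2^m) = ones c"
  using ones_shift[of 0 m c] by simp

lemma card_filter_int: "finite S \<Longrightarrow> int (card {x\<in>S. P x}) = (\<Sum>x\<in>S. if P x then 1 else 0)"
  by (subst sum.inter_filter[symmetric]) simp_all

lemma Delta3_sum: "Delta3 a b = (\<Sum>x\<in>{a..<b}. if 3 dvd x then (-1)^ones x else 0)"
proof -
  have "(\<Sum>x\<in>{a..<b}. if 3 dvd x then (-1)^ones x else (0::int)) =
     (\<Sum>x\<in>{a..<b}. (if 3 dvd x \<and> evil x then 1 else 0) - (if 3 dvd x \<and> odious x then 1 else 0))"
    by (rule sum.cong[OF refl]) (simp add: evil_def odious_def minus_one_power_iff)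
  also have "\<dots> = int (card {x \<in> {a..<b}. 3 dvd x \<and> evil x})
              - int (card {x \<in> {a..<b}. 3 dvd x \<and> odious x})"
    unfolding card_filter_int[OF finite_atLeastLessThan] by (simp add: sum_subtractf)
  finally show ?thesis unfolding Delta3_def by simp
qed

lemma block: "Delta3 (c*2^m) (c*2^m + 2^m) =
   (if even (ones c) then 1 else -1) * F m ((3 - (c*2^m) mod 3) mod 3)"
proof -
  have "Delta3 (c*2^m) (c*2^m + 2^m) = (\<Sum>y<2^m. if 3 dvd (y + c*2^m) then (-1)^ones (y + c*2^m) else 0)"
    unfolding Delta3_sum add.commute[of "c*2^m" "2^m"]
    using sum.shift_bounds_nat_ivl[of "\<lambda>x. if 3 dvd x then (-1)^ones x else (0::int)" 0 "c*2^m" "2^m"]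
    by (simp add: lessThan_atLeast0)
  also have "\<dots> = (\<Sum>y<2^m. (if even (ones c) then 1 else -1) * (if y mod 3 = (3 - (c*2^m) mod 3) mod 3 then (-1)^ones y else 0))"
  proof (rule sum.cong[OF refl])
    fix y assume "y \<in> {..<(2::nat)^m}"
    then have o: "ones (y + c*2^m) = ones c + ones y" using ones_shift[of y m c] by (simp add: add.commute)
    have d0: "\<And>N::nat. (3 dvd (N + y)) = (y mod 3 = (3 - N mod 3) mod 3)" 
    proof -
      fix N :: nat
      have "(3 dvd (N + y)) = ((N mod 3 + y mod 3) mod 3 = 0)" by (simp add: dvd_eq_mod_eq_0 mod_add_eq)
      also have "\<dots> = (y mod 3 = (3 - N mod 3) mod 3)" using aux3[of "N mod 3" "y mod 3"] by simp
      finally show "(3 dvd (N + y)) = (y mod 3 = (3 - N mod 3) mod 3)" .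
    qed
    have d: "(3 dvd (y + c*2^m)) = (y mod 3 = (3 - (c*2^m) mod 3) mod 3)" by (subst add.commute) (rule d0)
    show "(if 3 dvd (y + c*2^m) then (-1)^ones (y + c*2^m) else 0) = (if even (ones c) then 1 else -1) * (if y mod 3 = (3 - (c*2^m) mod 3) mod 3 then (-1)^ones y else (0::int))"
      unfolding d o by (simp add: power_add)
  qed
  also have "\<dots> = (if even (ones c) then 1 else -1) * F m ((3 - (c*2^m) mod 3) mod 3)"
    unfolding F_def by (simp add: sum_distrib_left)
  finally show ?thesis .
qed

lemma pow2_mod3: "(2::nat)^n mod 3 = (if even n then 1 else 2)"
proof (induction n)
  case 0 then show ?case by simp
next
  case (Suc n)
  have "(2::nat)^Suc n mod 3 = (2 * (2^n mod 3)) mod 3" by (simp add: mod_mult_right_eq)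
  then show ?case using Suc by auto
qed

lemma ones_pow2: "ones (2^k) = 1" using ones_mult[of 1 k] ones1 by simp

lemma ones_5: "ones (5*2^k) = 2"
proof -
  have a: "ones 5 = 1 + ones 2" using ones_rec[of 5] by simp
  have b: "ones 2 = ones 1" using ones_rec[of 2] by simp
  show ?thesis using ones_mult[of 5 k] a b ones1 by simp
qed

lemma F_gen: assumes "1 \<le> m"
  shows "F m 0 = (if even m then 2*3^(m div 2 - 1) else 3^((m-1) div 2))"
    "F m 1 = -(3^((m-1) div 2))"
    "F m 2 = (if even m then -(3^(m div 2 - 1)) else 0)"
proof -
  define k where "k = (m - 1) div 2"
  have "m = 2*k+1 \<or> m = 2*k+2" using assms unfolding k_def by presburger
  then have "F m 0 = (if even m then 2*3^(m div 2 - 1) else 3^((m-1) div 2)) \<and>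
    F m 1 = -(3^((m-1) div 2)) \<and>
    F m 2 = (if even m then -(3^(m div 2 - 1)) else 0)"
  proof
    assume "m = 2*k+1" then show ?thesis using F_closed[of k] by simp
  next
    assume "m = 2*k+2" then show ?thesis using F_closed[of k] by simp
  qed
  then show "F m 0 = (if even m then 2*3^(m div 2 - 1) else 3^((m-1) div 2))"
    "F m 1 = -(3^((m-1) div 2))"
    "F m 2 = (if even m then -(3^(m div 2 - 1)) else 0)" by auto
qed

lemma P1: "Delta3 0 (2^n) = F n 0"
  using block[of 0 n] by simp

lemma P2: assumes "m \<le> n"
  shows "Delta3 (2^n) (2^n+2^m) = - F m ((3 - 2^n mod 3) mod 3)"
proof -
  have e: "(2::nat)^n = 2^(n-m)*2^m" using assms by (simp add: power_add[symmetric])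
  show ?thesis using block[of "2^(n-m)" m] unfolding e[symmetric] ones_pow2 by simp
qed

lemma P3: assumes "m + 2 \<le> n"
  shows "Delta3 (2^n+2^(n-2)) (2^n+2^(n-2)+2^m) = F m ((3 - 2^(n-1) mod 3) mod 3)"
proof -
  define j where "j = n - 2"
  have nj: "n = j + 2" using assms unfolding j_def by simp
  have e1: "(2::nat)^(n-2) = 2^(n-2-m)*2^m" using assms by (simp add: power_add[symmetric])
  have e2: "(2::nat)^n = 4*2^(n-2)" unfolding nj by (simp add: power_add)
  have e: "(2::nat)^n+2^(n-2) = (5*2^(n-2-m))*2^m" using e1 e2 by simp
  have e3: "(2::nat)^(n-1) = 2*2^(n-2)" unfolding nj by simp
  have md: "((5*2^(n-2-m))*2^m) mod 3 = (2::nat)^(n-1) mod 3"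
  proof -
    have "(5*2^(n-2-m))*2^m = (2::nat)^(n-1) + 3*2^(n-2)" using e1 e3 by simp
    then show ?thesis by simp
  qed
  show ?thesis using block[of "5*2^(n-2-m)" m] unfolding e md ones_5 by simp
qed

theorem theorem3:
  shows "(\<forall>n::nat. n \<ge> 1 \<longrightarrow>
            Delta3 0 (2^n) = (if even n then 2 * 3 ^ (n div 2 - 1) else 3 ^ ((n - 1) div 2)))
       \<and> (\<forall>n m :: nat.
            (odd n \<and> 1 \<le> m \<and> m \<le> n - 1 \<longrightarrow>
               Delta3 (2^n) (2^n + 2^m) = 3 ^ ((m - 1) div 2))
          \<and> (even n \<and> even m \<and> 2 \<le> m \<and> m \<le> n - 2 \<longrightarrow>
               Delta3 (2^n) (2^n + 2^m) = 3 ^ (m div 2 - 1))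
          \<and> (even n \<and> odd m \<and> 1 \<le> m \<and> m \<le> n - 1 \<longrightarrow>
               Delta3 (2^n) (2^n + 2^m) = 0))
       \<and> (\<forall>n m :: nat.
            (even n \<and> 1 \<le> m \<and> m + 3 \<le> n \<longrightarrow>
               Delta3 (2^n + 2^(n-2)) (2^n + 2^(n-2) + 2^m) = - (3 ^ ((m - 1) div 2)))
          \<and> (odd n \<and> even m \<and> 2 \<le> m \<and> m + 3 \<le> n \<longrightarrow>
               Delta3 (2^n + 2^(n-2)) (2^n + 2^(n-2) + 2^m) = - (3 ^ (m div 2 - 1)))
          \<and> (odd n \<and> odd m \<and> 1 \<le> m \<and> m + 4 \<le> n \<longrightarrow>
               Delta3 (2^n + 2^(n-2)) (2^n + 2^(n-2) + 2^m) = 0))"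
proof (intro conjI allI impI)
  fix n :: nat assume "n \<ge> 1"
  then show "Delta3 0 (2^n) = (if even n then 2 * 3 ^ (n div 2 - 1) else 3 ^ ((n - 1) div 2))"
    using P1 F_gen(1) by simp
next
  fix n m :: nat
  assume h: "odd n \<and> 1 \<le> m \<and> m \<le> n - 1"
  have mn: "m \<le> n" using h by linarith
  then show "Delta3 (2^n) (2^n + 2^m) = 3 ^ ((m - 1) div 2)"
    using h mn P2[of m n] pow2_mod3[of n] F_gen(2)[of m] by simp
next
  fix n m :: nat
  assume h: "even n \<and> even m \<and> 2 \<le> m \<and> m \<le> n - 2"
  have mn: "m \<le> n" using h by linarith
  then show "Delta3 (2^n) (2^n + 2^m) = 3 ^ (m div 2 - 1)"
    using h mn P2[of m n] pow2_mod3[of n] F_gen(3)[of m] by simp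
next
  fix n m :: nat
  assume h: "even n \<and> odd m \<and> 1 \<le> m \<and> m \<le> n - 1"
  have mn: "m \<le> n" using h by linarith
  then show "Delta3 (2^n) (2^n + 2^m) = 0"
    using h mn P2[of m n] pow2_mod3[of n] F_gen(3)[of m] by simp
next
  fix n m :: nat
  assume h: "even n \<and> 1 \<le> m \<and> m + 3 \<le> n"
  then have "odd (n-1)" by presburger
  then show "Delta3 (2^n + 2^(n-2)) (2^n + 2^(n-2) + 2^m) = - (3 ^ ((m - 1) div 2))"
    using h P3[of m n] pow2_mod3[of "n-1"] F_gen(2)[of m] by simp
next
  fix n m :: nat
  assume h: "odd n \<and> even m \<and> 2 \<le> m \<and> m + 3 \<le> n"
  then have "even (n-1)" by presburger
  then show "Delta3 (2^n + 2^(n-2)) (2^n + 2^(n-2) + 2^m) = - (3 ^ (m div 2 - 1))"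
    using h P3[of m n] pow2_mod3[of "n-1"] F_gen(3)[of m] by simp
next
  fix n m :: nat
  assume h: "odd n \<and> odd m \<and> 1 \<le> m \<and> m + 4 \<le> n"
  then have "even (n-1)" by presburger
  then show "Delta3 (2^n + 2^(n-2)) (2^n + 2^(n-2) + 2^m) = 0"
    using h P3[of m n] pow2_mod3[of "n-1"] F_gen(3)[of m] by simp
qed

end
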